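(* Let $\psi\in\mathcal K^\star$ have radius of convergence $R_\psi>0$, apex $\tau$ and Khinchin family $(Y_t)$. For $t\in(0,R_\psi)$ let $q(t)$ be the extinction probability of the Galton–Watson process with offspring distribution $Y_t$. Then $q(t)\le\tau/t$ for every $t\in(0,R_\psi)$.
   Context: $\mathcal K$ is the class of non-constant power series $f(z)=\sum_{n\ge0}a_nz^n$ with positive radius of convergence $R$, non-negative coefficients and $a_0>0$; its Khinchin family $(X_t)$ is given by $\mathbf P(X_t=n)=a_nt^n/f(t)$ for $n\ge0$, $t\in(0,R)$, with mean $m_f(t)=tf'(t)/f(t)$ (increasing in $t$). $\mathcal K^\star$ is the subclass of $f\in\mathcal K$ with $\lim_{t\uparrow R}m_f(t)>1$; the apex is the unique $\tau\in(0,R)$ with $m_f(\tau)=1$. The extinction probability is the probability that the Galton–Watson tree is finite. *)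

theory Defs
  imports "HOL-Analysis.Analysis" "HOL-Probability.Probability"
begin

definition pseries :: "(nat \<Rightarrow> real) \<Rightarrow> real \<Rightarrow> real" where
  "pseries a t = (\<Sum>n. a n * t ^ n)"

definition khinchin_class :: "(nat \<Rightarrow> real) \<Rightarrow> bool" where
  "khinchin_class a \<longleftrightarrow> conv_radius a > 0 \<and> (\<forall>n. a n \<ge> 0) \<and> a 0 > 0
     \<and> (\<exists>n\<ge>1. a n \<noteq> 0)"

definition kmean :: "(nat \<Rightarrow> real) \<Rightarrow> real \<Rightarrow> real" where
  "kmean a t = t * deriv (pseries a) t / pseries a t"

definition kdomain :: "(nat \<Rightarrow> real) \<Rightarrow> real set" where
  "kdomain a = {t. 0 < t \<and> ereal t < conv_radius a}"

text \<open>K*: the limit of the (increasing) mean as t tends to R from below exceeds 1;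
  for an increasing function this limit is the supremum over (0,R).\<close>
definition kstar_class :: "(nat \<Rightarrow> real) \<Rightarrow> bool" where
  "kstar_class a \<longleftrightarrow> khinchin_class a \<and> (SUP t\<in>kdomain a. ereal (kmean a t)) > 1"

definition apex :: "(nat \<Rightarrow> real) \<Rightarrow> real" where
  "apex a = (THE \<tau>. \<tau> \<in> kdomain a \<and> kmean a \<tau> = 1)"

definition khinchin_pmf :: "(nat \<Rightarrow> real) \<Rightarrow> real \<Rightarrow> nat pmf" where
  "khinchin_pmf a t = embed_pmf (\<lambda>n. a n * t ^ n / pseries a t)"

fun iid_sum_pmf :: "nat pmf \<Rightarrow> nat \<Rightarrow> nat pmf" where
  "iid_sum_pmf p 0 = return_pmf 0"
| "iid_sum_pmf p (Suc k) = bind_pmf (iid_sum_pmf p k) (\<lambda>s. map_pmf (\<lambda>x. s + x) p)"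

fun gw_generation :: "nat pmf \<Rightarrow> nat \<Rightarrow> nat pmf" where
  "gw_generation p 0 = return_pmf 1"
| "gw_generation p (Suc n) = bind_pmf (gw_generation p n) (iid_sum_pmf p)"

text \<open>Extinction probability: P(tree finite) = P(\<exists>n. Z_n = 0) = lim_n P(Z_n = 0),
  the events {Z_n = 0} being increasing.\<close>
definition extinction_prob :: "nat pmf \<Rightarrow> real" where
  "extinction_prob p = lim (\<lambda>n. pmf (gw_generation p n) 0)"

end

theory Submission
  imports Defs
begin

lemma pseries_eq: "pseries a = (\<lambda>x. \<Sum>n. a n * x ^ n)"
  by (rule ext) (simp add: pseries_def)

lemma exists_between:
  fixes x :: real and R :: ereal
  assumes "ereal \<bar>x\<bar> < R"
  obtains r where "\<bar>x\<bar> < r" "ereal r < R"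
  using ereal_dense2[OF assms] by auto

lemma diffs_summable_gen:
  fixes c :: "nat \<Rightarrow> real" and R :: ereal
  assumes "\<And>y. ereal \<bar>y\<bar> < R \<Longrightarrow> summable (\<lambda>n. c n * y ^ n)"
    and "ereal \<bar>x\<bar> < R"
  shows "summable (\<lambda>n. diffs c n * x ^ n)"
proof -
  obtain r where r: "\<bar>x\<bar> < r" "ereal r < R" using exists_between[OF assms(2)] by blast
  show ?thesis
  proof (rule termdiff_converges[where K = r])
    show "norm x < r" using r by simp
    fix y :: real assume "norm y < r"
    then have "ereal \<bar>y\<bar> < ereal r" by simp
    then have "ereal \<bar>y\<bar> < R" using r(2) by (rule less_trans)
    then show "summable (\<lambda>n. c n * y ^ n)" by (rule assms(1))
  qed
qed

lemma deriv_gen: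
  fixes c :: "nat \<Rightarrow> real" and R :: ereal
  assumes "\<And>y. ereal \<bar>y\<bar> < R \<Longrightarrow> summable (\<lambda>n. c n * y ^ n)"
    and "ereal \<bar>x\<bar> < R"
  shows "((\<lambda>x. \<Sum>n. c n * x ^ n) has_field_derivative (\<Sum>n. diffs c n * x ^ n)) (at x)"
proof -
  obtain r where r: "\<bar>x\<bar> < r" "ereal r < R" using exists_between[OF assms(2)] by blast
  have "summable (\<lambda>n. c n * r ^ n)"
    using r by (intro assms(1)) auto
  then show ?thesis by (rule termdiffs_strong) (use r in auto)
qed

lemma shift_sum:
  fixes c :: "nat \<Rightarrow> real"
  assumes "summable (\<lambda>n. diffs c n * x ^ n)"
  shows "summable (\<lambda>n. real n * c n * x ^ n)"
    "x * (\<Sum>n. diffs c n * x ^ n) = (\<Sum>n. real n * c n * x ^ n)"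
proof -
  let ?g = "\<lambda>n. real n * c n * x ^ n"
  have eq: "(\<lambda>n. ?g (Suc n)) = (\<lambda>n. x * (diffs c n * x ^ n))"
    by (rule ext) (simp add: diffs_def algebra_simps)
  have s: "summable (\<lambda>n. ?g (Suc n))" unfolding eq using assms by (rule summable_mult)
  then show "summable ?g" using summable_Suc_iff by blast
  have "(\<Sum>n. ?g (Suc n)) = x * (\<Sum>n. diffs c n * x ^ n)"
    unfolding eq using assms by (rule suminf_mult)
  moreover have "(\<Sum>n. ?g (Suc n)) = suminf ?g - ?g 0"
    by (rule suminf_split_head) (use s summable_Suc_iff in blast)
  ultimately show "x * (\<Sum>n. diffs c n * x ^ n) = suminf ?g" by simp
qed


lemma ereal_lt_trans:
  assumes "0 < x" "x < y" "ereal y < R"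
  shows "ereal \<bar>x\<bar> < R"
proof -
  have "ereal \<bar>x\<bar> < ereal y" using assms by simp
  then show ?thesis using assms(3) by (rule less_trans)
qed

lemma ereal_le_trans:
  assumes "x \<le> y" "ereal y < R"
  shows "ereal x < R"
proof -
  have "ereal x \<le> ereal y" using assms by simp
  then show ?thesis using assms(2) by (rule le_less_trans)
qed

lemma kc_facts:
  assumes "khinchin_class a"
  shows "conv_radius a > 0" "\<And>n. a n \<ge> 0" "a 0 > 0"
  using assms unfolding khinchin_class_def by auto

lemma sum_a:
  assumes "ereal \<bar>x\<bar> < conv_radius a"
  shows "summable (\<lambda>n. a n * x ^ n)"
  using summable_in_conv_radius[of x a] assms by simp

lemma sum_d1:
  assumes "ereal \<bar>x\<bar> < conv_radius a"
  shows "summable (\<lambda>n. diffs a n * x ^ n)"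
  by (rule diffs_summable_gen[where R="conv_radius a"]) (auto intro: sum_a assms)

lemma sum_d2:
  assumes "ereal \<bar>x\<bar> < conv_radius a"
  shows "summable (\<lambda>n. diffs (diffs a) n * x ^ n)"
  by (rule diffs_summable_gen[where R="conv_radius a"]) (auto intro: sum_d1 assms)

lemma deriv_f:
  assumes "ereal \<bar>x\<bar> < conv_radius a"
  shows "(pseries a has_field_derivative (\<Sum>n. diffs a n * x ^ n)) (at x)"
  unfolding pseries_eq
  by (rule deriv_gen[where R="conv_radius a"]) (auto intro: sum_a assms)

lemma deriv_f1:
  assumes "ereal \<bar>x\<bar> < conv_radius a"
  shows "((\<lambda>x. \<Sum>n. diffs a n * x ^ n) has_field_derivative (\<Sum>n. diffs (diffs a) n * x ^ n)) (at x)"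
  by (rule deriv_gen[where R="conv_radius a"]) (auto intro: sum_d1 assms)

lemma sum_D:
  assumes "ereal \<bar>x\<bar> < conv_radius a"
  shows "summable (\<lambda>n. real n * a n * x ^ n)"
  using shift_sum(1)[OF sum_d1[OF assms]] .

lemma kmean_eq:
  assumes "ereal \<bar>x\<bar> < conv_radius a"
  shows "kmean a x = (\<Sum>n. real n * a n * x ^ n) / pseries a x"
proof -
  have "deriv (pseries a) x = (\<Sum>n. diffs a n * x ^ n)"
    by (rule DERIV_imp_deriv) (rule deriv_f[OF assms])
  then show ?thesis unfolding kmean_def using shift_sum(2)[OF sum_d1[OF assms]] by simp
qed

lemma f_pos:
  assumes K: "khinchin_class a" and "0 \<le> x" "ereal x < conv_radius a"
  shows "pseries a x \<ge> a 0" "pseries a x > 0"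
proof -
  have s: "summable (\<lambda>n. a n * x ^ n)" using sum_a[of x a] assms by simp
  have "(\<Sum>n\<in>{..<1}. a n * x ^ n) \<le> (\<Sum>n. a n * x ^ n)"
    by (rule sum_le_suminf[OF s]) (use kc_facts[OF K] assms(2) in auto)
  then show "pseries a x \<ge> a 0" by (simp add: pseries_def)
  then show "pseries a x > 0" using kc_facts(3)[OF K] by linarith
qed

lemma H_cont:
  assumes "0 \<le> s" "ereal s < conv_radius a"
  shows "continuous_on {0..s} (\<lambda>x. x * (\<Sum>n. diffs a n * x ^ n) - pseries a x)"
proof (rule continuous_at_imp_continuous_on, intro ballI)
  fix x assume x: "x \<in> {0..s}"
  have xs: "0 \<le> x" "x \<le> s" using x by auto
  have "ereal x < conv_radius a" by (rule ereal_le_trans[OF xs(2) assms(2)])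
  then have xr: "ereal \<bar>x\<bar> < conv_radius a" using xs(1) by simp
  have c1: "isCont (\<lambda>x. \<Sum>n. diffs a n * x ^ n) x"
    using deriv_f1[OF xr] by (rule DERIV_isCont)
  have c2: "isCont (pseries a) x"
    using deriv_f[OF xr] by (rule DERIV_isCont)
  show "isCont (\<lambda>x. x * (\<Sum>n. diffs a n * x ^ n) - pseries a x) x"
    using c1 c2 by (intro continuous_intros) auto
qed


lemma sum_g:
  assumes "ereal \<bar>x\<bar> < conv_radius a"
  shows "summable (\<lambda>n. (real n - 1) * a n * x ^ n)"
    "(\<Sum>n. (real n - 1) * a n * x ^ n) = (\<Sum>n. real n * a n * x ^ n) - pseries a x"
proof -
  have e: "(\<lambda>n. (real n - 1) * a n * x ^ n) = (\<lambda>n. real n * a n * x ^ n - a n * x ^ n)"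
    by (rule ext) (simp add: algebra_simps)
  show "summable (\<lambda>n. (real n - 1) * a n * x ^ n)" unfolding e
    using sum_D[OF assms] sum_a[OF assms] by (rule summable_diff)
  show "(\<Sum>n. (real n - 1) * a n * x ^ n) = (\<Sum>n. real n * a n * x ^ n) - pseries a x"
    unfolding e pseries_def using sum_D[OF assms] sum_a[OF assms] by (rule suminf_diff[symmetric])
qed

lemma uniq:
  assumes K: "khinchin_class a" and "0 < s1" "s1 < s2" "ereal s2 < conv_radius a"
    and e1: "(\<Sum>n. real n * a n * s1 ^ n) = pseries a s1"
    and e2: "(\<Sum>n. real n * a n * s2 ^ n) = pseries a s2"
  shows False
proof -
  have r2: "ereal \<bar>s2\<bar> < conv_radius a" using assms by simp
  have r1: "ereal \<bar>s1\<bar> < conv_radius a" by (rule ereal_lt_trans[OF assms(2,3,4)])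
  define d where "d n = (real n - 1) * a n * s2 ^ n - (real n - 1) * a n * s1 ^ n" for n
  have sd: "summable d" unfolding d_def using sum_g(1)[OF r2] sum_g(1)[OF r1] by (rule summable_diff)
  have "suminf d = 0" unfolding d_def
    using suminf_diff[OF sum_g(1)[OF r2] sum_g(1)[OF r1]] sum_g(2)[OF r2] sum_g(2)[OF r1] e1 e2 by simp
  moreover have dnn: "\<forall>n. 0 \<le> d n"
  proof
    fix n
    show "0 \<le> d n"
    proof (cases n)
      case 0 then show ?thesis by (simp add: d_def)
    next
      case (Suc m)
      have "s1 ^ n \<le> s2 ^ n" using assms by (intro power_mono) auto
      moreover have "real n - 1 \<ge> 0" using Suc by simp
      ultimately have "(real n - 1) * a n * s1 ^ n \<le> (real n - 1) * a n * s2 ^ n"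
        using kc_facts(2)[OF K, of n] by (intro mult_left_mono) auto
      then show ?thesis by (simp add: d_def)
    qed
  qed
  ultimately have d0: "\<forall>n. d n = 0" using suminf_eq_zero_iff[OF sd] by blast
  have an: "a n = 0" if "n \<ge> 2" for n
  proof -
    have "s1 ^ n < s2 ^ n" using assms that by (intro power_strict_mono) auto
    moreover have "real n - 1 > 0" using that by simp
    moreover have "d n = (real n - 1) * a n * (s2 ^ n - s1 ^ n)" by (simp add: d_def algebra_simps)
    ultimately show ?thesis using d0 by simp
  qed
  have "(\<Sum>n. (real n - 1) * a n * s1 ^ n) = (\<Sum>n\<in>{0}. (real n - 1) * a n * s1 ^ n)"
  proof (rule suminf_finite)
    fix n :: nat assume "n \<notin> {0}"
    then have "n = 1 \<or> n \<ge> 2" by auto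
    then show "(real n - 1) * a n * s1 ^ n = 0" using an by auto
  qed simp
  then have "(\<Sum>n. (real n - 1) * a n * s1 ^ n) = - a 0" by simp
  then show False using sum_g(2)[OF r1] e1 kc_facts(3)[OF K] by simp
qed

lemma apex_props:
  assumes KS: "kstar_class a"
  shows "apex a \<in> kdomain a" "(\<Sum>n. real n * a n * apex a ^ n) = pseries a (apex a)"
proof -
  have K: "khinchin_class a" using KS kstar_class_def by blast
  have "1 < (SUP t\<in>kdomain a. ereal (kmean a t))" using KS by (simp add: kstar_class_def)
  then obtain s where s: "s \<in> kdomain a" "1 < kmean a s" by (auto simp: less_SUP_iff)
  have s0: "0 < s" "ereal s < conv_radius a" using s(1) kdomain_def by auto
  have sr: "ereal \<bar>s\<bar> < conv_radius a" using s0 by simp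
  define H where "H x = x * (\<Sum>n. diffs a n * x ^ n) - pseries a x" for x
  have fs: "pseries a s > 0" using f_pos[OF K] s0 by simp
  have Hs: "H s = (\<Sum>n. real n * a n * s ^ n) - pseries a s"
    unfolding H_def using shift_sum(2)[OF sum_d1[OF sr]] by simp
  have "(\<Sum>n. real n * a n * s ^ n) / pseries a s > 1" using s(2) kmean_eq[OF sr] by simp
  then have "H s > 0" unfolding Hs using fs by (simp add: field_simps)
  have H0: "H 0 = - a 0" unfolding H_def pseries_def by simp
  obtain \<tau> where tau: "0 \<le> \<tau>" "\<tau> \<le> s" "H \<tau> = 0"
    using IVT'[of H 0 0 s] H0 \<open>H s > 0\<close> kc_facts(3)[OF K] H_cont[of s a] s0
    unfolding H_def by force
  have t0: "\<tau> > 0" using tau H0 kc_facts(3)[OF K] by (cases "\<tau> = 0") auto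
  have tr: "ereal \<tau> < conv_radius a" by (rule ereal_le_trans[OF tau(2) s0(2)])
  have tr': "ereal \<bar>\<tau>\<bar> < conv_radius a" using tr t0 by simp
  have eqt: "(\<Sum>n. real n * a n * \<tau> ^ n) = pseries a \<tau>"
    using tau(3) unfolding H_def using shift_sum(2)[OF sum_d1[OF tr']] by simp
  have ft: "pseries a \<tau> > 0" using f_pos[OF K] t0 tr by simp
  have P: "\<tau> \<in> kdomain a \<and> kmean a \<tau> = 1"
    using t0 tr kmean_eq[OF tr'] eqt ft by (simp add: kdomain_def)
  have U: "x = \<tau>" if "x \<in> kdomain a \<and> kmean a x = 1" for x
  proof -
    have x0: "0 < x" "ereal x < conv_radius a" using that kdomain_def by auto
    have xr: "ereal \<bar>x\<bar> < conv_radius a" using x0 by simp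
    have fx: "pseries a x > 0" using f_pos[OF K] x0 by simp
    have eqx: "(\<Sum>n. real n * a n * x ^ n) = pseries a x"
      using that kmean_eq[OF xr] fx by simp
    show "x = \<tau>"
    proof (rule ccontr)
      assume "x \<noteq> \<tau>"
      then have "x < \<tau> \<or> \<tau> < x" by auto
      then show False
        using uniq[OF K x0(1) _ tr _ eqt] uniq[OF K t0 _ x0(2) eqt eqx] eqx by blast
    qed
  qed
  have "apex a = \<tau>" unfolding apex_def by (rule the_equality[where P="\<lambda>x. x \<in> kdomain a \<and> kmean a x = 1", OF P U])
  then show "apex a \<in> kdomain a" "(\<Sum>n. real n * a n * apex a ^ n) = pseries a (apex a)"
    using P eqt by auto
qed


lemma bern_aux:
  fixes x y :: real
  assumes "0 < x" "x \<le> y"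
  shows "y ^ m - x ^ m \<ge> real m * x ^ m * (y - x) / x"
proof (induction m)
  case 0 then show ?case by simp
next
  case (Suc m)
  have e: "y ^ Suc m - x ^ Suc m = y * (y ^ m - x ^ m) + x ^ m * (y - x)" by (simp add: algebra_simps)
  have i1: "y * (y ^ m - x ^ m) \<ge> y * (real m * x ^ m * (y - x) / x)"
    using Suc assms by (intro mult_left_mono) auto
  have i2: "y * (real m * x ^ m * (y - x) / x) \<ge> x * (real m * x ^ m * (y - x) / x)"
    using assms by (intro mult_right_mono) (auto intro!: divide_nonneg_pos mult_nonneg_nonneg)
  have e2: "x * (real m * x ^ m * (y - x) / x) + x ^ m * (y - x) = real (Suc m) * x ^ Suc m * (y - x) / x"
    using assms by (simp add: field_simps)
  have "y ^ Suc m - x ^ Suc m \<ge> real (Suc m) * x ^ Suc m * (y - x) / x"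
    using e i1 i2 e2 by linarith
  then show ?case .
qed

lemma term_ineq:
  fixes x y :: real
  assumes "0 < x" "x \<le> y"
  shows "(real n - 1) * x ^ n * (y - x) \<le> x * y ^ n - y * x ^ n"
proof (cases n)
  case 0 then show ?thesis by simp
next
  case (Suc m)
  have b: "y ^ m - x ^ m \<ge> real m * x ^ m * (y - x) / x" by (rule bern_aux[OF assms])
  have "x * y ^ n - y * x ^ n = x * y * (y ^ m - x ^ m)" using Suc by (simp add: algebra_simps)
  also have "\<dots> \<ge> x * y * (real m * x ^ m * (y - x) / x)"
    using b assms by (intro mult_left_mono) auto
  also have "x * y * (real m * x ^ m * (y - x) / x) = y * (real m * x ^ m * (y - x))"
    using assms by (simp add: field_simps)
  also have "y * (real m * x ^ m * (y - x)) \<ge> x * (real m * x ^ m * (y - x))"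
    using assms by (intro mult_right_mono) auto
  also have "x * (real m * x ^ m * (y - x)) = (real n - 1) * x ^ n * (y - x)"
    using Suc by (simp add: algebra_simps)
  finally show ?thesis by linarith
qed

lemma key_ineq:
  assumes KS: "kstar_class a" and "apex a < t" "ereal t < conv_radius a"
  shows "t * pseries a (apex a) \<le> apex a * pseries a t"
proof -
  have K: "khinchin_class a" using KS kstar_class_def by blast
  let ?x = "apex a"
  have x0: "0 < ?x" "ereal ?x < conv_radius a" using apex_props(1)[OF KS] kdomain_def by auto
  have xr: "ereal \<bar>?x\<bar> < conv_radius a" using x0 by simp
  have tr: "ereal \<bar>t\<bar> < conv_radius a" using x0 assms by simp
  have h0: "(\<Sum>n. (real n - 1) * a n * ?x ^ n) = 0" using sum_g(2)[OF xr] apex_props(2)[OF KS] by simp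
  have s1: "summable (\<lambda>n. ?x * (a n * t ^ n))" using sum_a[OF tr] by (rule summable_mult)
  have s2: "summable (\<lambda>n. t * (a n * ?x ^ n))" using sum_a[OF xr] by (rule summable_mult)
  have s3: "summable (\<lambda>n. (t - ?x) * ((real n - 1) * a n * ?x ^ n))" using sum_g(1)[OF xr] by (rule summable_mult)
  have "(\<Sum>n. (t - ?x) * ((real n - 1) * a n * ?x ^ n)) \<le> (\<Sum>n. ?x * (a n * t ^ n) - t * (a n * ?x ^ n))"
  proof (rule suminf_le)
    fix n
    have "(real n - 1) * ?x ^ n * (t - ?x) \<le> ?x * t ^ n - t * ?x ^ n"
      using term_ineq[of ?x t n] x0 assms by simp
    then have "a n * ((real n - 1) * ?x ^ n * (t - ?x)) \<le> a n * (?x * t ^ n - t * ?x ^ n)"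
      using kc_facts(2)[OF K, of n] by (rule mult_left_mono)
    then show "(t - ?x) * ((real n - 1) * a n * ?x ^ n) \<le> ?x * (a n * t ^ n) - t * (a n * ?x ^ n)"
      by (simp add: algebra_simps)
  qed (use s3 summable_diff[OF s1 s2] in auto)
  also have "(\<Sum>n. ?x * (a n * t ^ n) - t * (a n * ?x ^ n)) = ?x * pseries a t - t * pseries a ?x"
    using suminf_diff[OF s1 s2] suminf_mult[OF sum_a[OF tr], of ?x] suminf_mult[OF sum_a[OF xr], of t]
    unfolding pseries_def by simp
  also have "(\<Sum>n. (t - ?x) * ((real n - 1) * a n * ?x ^ n)) = 0"
    using suminf_mult[OF sum_g(1)[OF xr], of "t - ?x"] h0 by simp
  finally show ?thesis by simp
qed


lemma iid_gf:
  fixes c :: real and p :: "nat pmf"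
  assumes "0 \<le> c"
  shows "(\<integral>\<^sup>+ y. ennreal (c ^ y) \<partial>iid_sum_pmf p k) = (\<integral>\<^sup>+ y. ennreal (c ^ y) \<partial>p) ^ k"
proof (induction k)
  case 0 then show ?case by simp
next
  case (Suc k)
  have inner: "(\<integral>\<^sup>+ x. ennreal (c ^ (s + x)) \<partial>p) = ennreal (c ^ s) * (\<integral>\<^sup>+ y. ennreal (c ^ y) \<partial>p)" for s
  proof -
    have "(\<lambda>x. ennreal (c ^ (s + x))) = (\<lambda>x. ennreal (c ^ s) * ennreal (c ^ x))"
      using assms by (auto simp: power_add ennreal_mult)
    then show ?thesis by (simp add: nn_integral_cmult)
  qed
  have "(\<integral>\<^sup>+ y. ennreal (c ^ y) \<partial>iid_sum_pmf p (Suc k))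
      = (\<integral>\<^sup>+ s. (\<integral>\<^sup>+ x. ennreal (c ^ (s + x)) \<partial>p) \<partial>iid_sum_pmf p k)" by simp
  also have "\<dots> = (\<integral>\<^sup>+ s. ennreal (c ^ s) * (\<integral>\<^sup>+ y. ennreal (c ^ y) \<partial>p) \<partial>iid_sum_pmf p k)"
    by (simp only: inner)
  also have "\<dots> = (\<integral>\<^sup>+ s. ennreal (c ^ s) \<partial>iid_sum_pmf p k) * (\<integral>\<^sup>+ y. ennreal (c ^ y) \<partial>p)"
    by (rule nn_integral_multc) simp
  finally show ?case using Suc by (simp add: mult.commute)
qed

lemma gen_gf:
  fixes c :: real and p :: "nat pmf"
  assumes "0 \<le> c" "(\<integral>\<^sup>+ y. ennreal (c ^ y) \<partial>p) \<le> ennreal c"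
  shows "(\<integral>\<^sup>+ y. ennreal (c ^ y) \<partial>gw_generation p n) \<le> ennreal c"
proof (induction n)
  case 0 then show ?case by simp
next
  case (Suc n)
  have "(\<integral>\<^sup>+ y. ennreal (c ^ y) \<partial>gw_generation p (Suc n))
      = (\<integral>\<^sup>+ k. (\<integral>\<^sup>+ y. ennreal (c ^ y) \<partial>p) ^ k \<partial>gw_generation p n)"
    using iid_gf[OF assms(1)] by simp
  also have "\<dots> \<le> (\<integral>\<^sup>+ k. ennreal (c ^ k) \<partial>gw_generation p n)"
  proof (rule nn_integral_mono)
    fix k
    have "(\<integral>\<^sup>+ y. ennreal (c ^ y) \<partial>p) ^ k \<le> ennreal c ^ k"
      using assms(2) by (rule power_mono) simp
    then show "(\<integral>\<^sup>+ y. ennreal (c ^ y) \<partial>p) ^ k \<le> ennreal (c ^ k)"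
      using assms(1) by (simp add: ennreal_power)
  qed
  finally show ?case using Suc by simp
qed

lemma q_le_gf:
  fixes c :: real and Z :: "nat pmf"
  assumes "0 \<le> c"
  shows "ennreal (pmf Z 0) \<le> (\<integral>\<^sup>+ y. ennreal (c ^ y) \<partial>Z)"
proof -
  have "ennreal (pmf Z 0) = (\<integral>\<^sup>+ y. indicator {0} y \<partial>Z)"
    by (simp add: emeasure_pmf_single)
  also have "\<dots> \<le> (\<integral>\<^sup>+ y. ennreal (c ^ y) \<partial>Z)"
    by (rule nn_integral_mono) (auto simp: indicator_def)
  finally show ?thesis .
qed

lemma mono_q: "pmf (gw_generation p n) 0 \<le> pmf (gw_generation p (Suc n)) 0"
proof -
  have "ennreal (pmf (gw_generation p n) 0) = (\<integral>\<^sup>+ y. indicator {0} y \<partial>gw_generation p n)"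
    by (simp add: emeasure_pmf_single)
  also have "\<dots> \<le> (\<integral>\<^sup>+ k. ennreal (pmf (iid_sum_pmf p k) 0) \<partial>gw_generation p n)"
    by (rule nn_integral_mono) (auto simp: indicator_def)
  also have "\<dots> = ennreal (pmf (gw_generation p (Suc n)) 0)"
    by (simp add: ennreal_pmf_bind)
  finally show ?thesis by (simp add: ennreal_le_iff pmf_nonneg)
qed

lemma pmf_k:
  assumes K: "khinchin_class a" and "0 < t" "ereal t < conv_radius a"
  shows "pmf (khinchin_pmf a t) n = a n * t ^ n / pseries a t"
proof -
  have tr: "ereal \<bar>t\<bar> < conv_radius a" using assms by simp
  have fp: "pseries a t > 0" using f_pos[OF K] assms by simp
  have nn: "0 \<le> a n * t ^ n / pseries a t" for n
    using kc_facts(2)[OF K, of n] fp assms by simp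
  have sm: "summable (\<lambda>n. a n * t ^ n / pseries a t)" using sum_a[OF tr] by (rule summable_divide)
  have "(\<integral>\<^sup>+ n. ennreal (a n * t ^ n / pseries a t) \<partial>count_space UNIV) = ennreal (\<Sum>n. a n * t ^ n / pseries a t)"
    by (simp add: nn_integral_count_space_nat suminf_ennreal2[OF nn sm])
  also have "(\<Sum>n. a n * t ^ n / pseries a t) = pseries a t / pseries a t"
    using suminf_divide[OF sum_a[OF tr], of "pseries a t"] unfolding pseries_def by simp
  finally have "(\<integral>\<^sup>+ n. ennreal (a n * t ^ n / pseries a t) \<partial>count_space UNIV) = 1"
    using fp by simp
  then show ?thesis unfolding khinchin_pmf_def using nn by (subst pmf_embed_pmf) auto
qed

lemma phi_val:
  assumes K: "khinchin_class a" and t: "0 < t" "ereal t < conv_radius a"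
    and x: "0 < x" "x < t"
  shows "(\<integral>\<^sup>+ y. ennreal ((x / t) ^ y) \<partial>khinchin_pmf a t) = ennreal (pseries a x / pseries a t)"
proof -
  have tr: "ereal \<bar>x\<bar> < conv_radius a" by (rule ereal_lt_trans[OF x t(2)])
  have fp: "pseries a t > 0" using f_pos[OF K] t by simp
  have nn: "0 \<le> a n * x ^ n / pseries a t" for n
    using kc_facts(2)[OF K, of n] fp x by simp
  have sm: "summable (\<lambda>n. a n * x ^ n / pseries a t)" using sum_a[OF tr] by (rule summable_divide)
  have e: "ennreal (pmf (khinchin_pmf a t) n) * ennreal ((x / t) ^ n) = ennreal (a n * x ^ n / pseries a t)" for n
  proof -
    have "pmf (khinchin_pmf a t) n * (x / t) ^ n = a n * x ^ n / pseries a t"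
      using pmf_k[OF K t] t by (simp add: power_divide)
    then show ?thesis using x t by (simp add: ennreal_mult'' pmf_nonneg flip: ennreal_mult)
  qed
  have "(\<integral>\<^sup>+ y. ennreal ((x / t) ^ y) \<partial>khinchin_pmf a t) = (\<Sum>n. ennreal (a n * x ^ n / pseries a t))"
    by (simp add: nn_integral_measure_pmf nn_integral_count_space_nat e)
  also have "\<dots> = ennreal (\<Sum>n. a n * x ^ n / pseries a t)" by (rule suminf_ennreal2[OF nn sm])
  also have "(\<Sum>n. a n * x ^ n / pseries a t) = pseries a x / pseries a t"
    using suminf_divide[OF sum_a[OF tr], of "pseries a t"] unfolding pseries_def by simp
  finally show ?thesis .
qed


theorem lemma6p7:
  fixes a :: "nat \<Rightarrow> real" and t :: real
  assumes "kstar_class a"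
    and "0 < t" and "ereal t < conv_radius a"
  shows "extinction_prob (khinchin_pmf a t) \<le> apex a / t"
proof -
  have K: "khinchin_class a" using assms(1) kstar_class_def by blast
  define p where "p = khinchin_pmf a t"
  define c where "c = apex a / t"
  define q where "q n = pmf (gw_generation p n) 0" for n
  have x0: "0 < apex a" using apex_props(1)[OF assms(1)] kdomain_def by auto
  have c0: "0 \<le> c" using x0 assms(2) by (simp add: c_def)
  have bnd: "q n \<le> c" for n
  proof (cases "t \<le> apex a")
    case True
    then have "1 \<le> c" using assms(2) by (simp add: c_def)
    then show ?thesis using pmf_le_1[of "gw_generation p n" 0] unfolding q_def by linarith
  next
    case False
    have ft: "pseries a t > 0" using f_pos[OF K] assms by simp
    have "t * pseries a (apex a) \<le> apex a * pseries a t"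
      using key_ineq[OF assms(1) _ assms(3)] False by simp
    have le: "pseries a (apex a) / pseries a t \<le> c"
      unfolding c_def using ft assms(2) \<open>t * pseries a (apex a) \<le> apex a * pseries a t\<close>
      by (simp add: field_simps)
    have "(\<integral>\<^sup>+ y. ennreal (c ^ y) \<partial>p) = ennreal (pseries a (apex a) / pseries a t)"
      unfolding p_def c_def using phi_val[OF K assms(2,3) x0] False by simp
    also have "\<dots> \<le> ennreal c" using le by (rule ennreal_leI)
    finally have phi: "(\<integral>\<^sup>+ y. ennreal (c ^ y) \<partial>p) \<le> ennreal c" .
    have "ennreal (q n) \<le> ennreal c"
      unfolding q_def using order_trans[OF q_le_gf[OF c0, of "gw_generation p n"] gen_gf[OF c0 phi, of n]] .
    then show ?thesis using c0 by (simp add: ennreal_le_iff)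
  qed
  have inc: "incseq q" unfolding q_def by (rule incseq_SucI) (rule mono_q)
  have bdd: "bdd_above (range q)" unfolding q_def by (intro bdd_aboveI[where M=1]) (auto simp: pmf_le_1)
  have lim: "q \<longlonglongrightarrow> (SUP i. q i)" by (rule LIMSEQ_incseq_SUP[OF bdd inc])
  have l: "lim q = (SUP i. q i)" using lim by (rule limI)
  have "(SUP i. q i) \<le> c" by (rule cSUP_least) (auto intro: bnd)
  then have "lim q \<le> c" unfolding l .
  then show ?thesis unfolding extinction_prob_def q_def p_def c_def .
qed

end
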